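(* A congruence $\sim$ on a finitely generated commutative monoid $Q$ is mesoprimary if and only if the set $F$ of non-nilpotent elements of $\bar Q=Q/\sim$ is a cancellative monoid that acts (by addition) semifreely on $\bar Q\setminus\{\infty\}$ with finitely many orbits (where $\bar Q\setminus\{\infty\}=\bar Q$ if $\bar Q$ has no nil).
   Context: In a commutative monoid $M$: $\infty$ is nil if $m+\infty=\infty$ for all $m$; $m$ is nilpotent if $nm$ is nil for some $n\in\mathbb N$; cancellative if $m+a=m+b\Rightarrow a=b$; partly cancellative if $m+a=m+b\ne$ nil implies $a=b$ for all cancellative $a,b$. A congruence on $Q$ is an equivalence relation $\sim$ with $a\sim b\Rightarrow a+c\sim b+c$; it is \emph{primary} if every element of $\bar Q$ is nilpotent or cancellative, and \emph{mesoprimary} if moreover every element of $\bar Q$ is partly cancellative. An action of a monoid $F$ on a set $T$ is \emph{semifree} if $t\mapsto f\cdot t$ is injective $T\to T$ for every $f\in F$ and $f\mapsto f\cdot t$ is injective $F\to T$ for every $t\in T$. An \emph{orbit} of the action is an equivalence class of the equivalence relation on $T$ generated by $s\sim f\cdot s$ ($s\in T$, $f\in F$). *)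

theory Defs
  imports Main
begin

text \<open>A congruence on Q is a relation R on the whole type; the quotient monoid Q/R has
  the classes R `` {a} as elements and [a] + [b] = [a + b].  All notions about
  elements of the quotient are expressed through representatives a :: 'a.\<close>

inductive_set mon_gen :: "'a::comm_monoid_add set \<Rightarrow> 'a set" for G where
  zero: "0 \<in> mon_gen G"
| gen: "g \<in> G \<Longrightarrow> g \<in> mon_gen G"
| add: "x \<in> mon_gen G \<Longrightarrow> y \<in> mon_gen G \<Longrightarrow> x + y \<in> mon_gen G"

definition fin_gen_monoid :: "'a::comm_monoid_add itself \<Rightarrow> bool" where
  "fin_gen_monoid _ \<longleftrightarrow> (\<exists>G::'a set. finite G \<and> mon_gen G = UNIV)"

definition congruence :: "('a::comm_monoid_add \<times> 'a) set \<Rightarrow> bool" where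
  "congruence R \<longleftrightarrow> equiv UNIV R \<and> (\<forall>a b c. (a, b) \<in> R \<longrightarrow> (a + c, b + c) \<in> R)"

definition nsum :: "nat \<Rightarrow> 'a::comm_monoid_add \<Rightarrow> 'a" where
  "nsum n m = (\<Sum>i<n. m)"

definition qnil :: "('a::comm_monoid_add \<times> 'a) set \<Rightarrow> 'a \<Rightarrow> bool" where
  "qnil R z \<longleftrightarrow> (\<forall>m. (m + z, z) \<in> R)"

definition qnilpotent :: "('a::comm_monoid_add \<times> 'a) set \<Rightarrow> 'a \<Rightarrow> bool" where
  "qnilpotent R m \<longleftrightarrow> (\<exists>n::nat. qnil R (nsum n m))"

definition qcancellative :: "('a::comm_monoid_add \<times> 'a) set \<Rightarrow> 'a \<Rightarrow> bool" where
  "qcancellative R m \<longleftrightarrow> (\<forall>a b. (m + a, m + b) \<in> R \<longrightarrow> (a, b) \<in> R)"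

definition qpartly_cancellative :: "('a::comm_monoid_add \<times> 'a) set \<Rightarrow> 'a \<Rightarrow> bool" where
  "qpartly_cancellative R m \<longleftrightarrow>
     (\<forall>a b. qcancellative R a \<and> qcancellative R b \<and> (m + a, m + b) \<in> R \<and> \<not> qnil R (m + a)
        \<longrightarrow> (a, b) \<in> R)"

definition primary :: "('a::comm_monoid_add \<times> 'a) set \<Rightarrow> bool" where
  "primary R \<longleftrightarrow> congruence R \<and> (\<forall>m. qnilpotent R m \<or> qcancellative R m)"

definition mesoprimary :: "('a::comm_monoid_add \<times> 'a) set \<Rightarrow> bool" where
  "mesoprimary R \<longleftrightarrow> primary R \<and> (\<forall>m. qpartly_cancellative R m)"

text \<open>Representatives of F (non-nilpotent classes) and of Q/R minus the nil.\<close>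
definition Fset :: "('a::comm_monoid_add \<times> 'a) set \<Rightarrow> 'a set" where
  "Fset R = {a. \<not> qnilpotent R a}"

definition Tset :: "('a::comm_monoid_add \<times> 'a) set \<Rightarrow> 'a set" where
  "Tset R = {b. \<not> qnil R b}"

definition F_cancellative_monoid :: "('a::comm_monoid_add \<times> 'a) set \<Rightarrow> bool" where
  "F_cancellative_monoid R \<longleftrightarrow>
     0 \<in> Fset R \<and> (\<forall>a\<in>Fset R. \<forall>b\<in>Fset R. a + b \<in> Fset R) \<and>
     (\<forall>a\<in>Fset R. \<forall>b\<in>Fset R. \<forall>c\<in>Fset R. (a + b, a + c) \<in> R \<longrightarrow> (b, c) \<in> R)"

definition F_acts_semifreely :: "('a::comm_monoid_add \<times> 'a) set \<Rightarrow> bool" where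
  "F_acts_semifreely R \<longleftrightarrow>
     (\<forall>a\<in>Fset R. \<forall>b\<in>Tset R. a + b \<in> Tset R) \<and>
     (\<forall>a\<in>Fset R. \<forall>b\<in>Tset R. \<forall>c\<in>Tset R. (a + b, a + c) \<in> R \<longrightarrow> (b, c) \<in> R) \<and>
     (\<forall>b\<in>Tset R. \<forall>a\<in>Fset R. \<forall>a'\<in>Fset R. (a + b, a' + b) \<in> R \<longrightarrow> (a, a') \<in> R)"

definition orbit_step :: "('a::comm_monoid_add \<times> 'a) set \<Rightarrow> ('a \<times> 'a) set" where
  "orbit_step R = {(s, t). s \<in> Tset R \<and> t \<in> Tset R \<and>
                      ((s, t) \<in> R \<or> (\<exists>a\<in>Fset R. (a + s, t) \<in> R))}"

definition orbits :: "('a::comm_monoid_add \<times> 'a) set \<Rightarrow> 'a set set" where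
  "orbits R = Tset R // ((orbit_step R \<union> (orbit_step R)\<inverse>)\<^sup>*)"

end

theory Submission
  imports Defs
begin

lemma cR_refl: "congruence R \<Longrightarrow> (a,a) \<in> R"
  unfolding congruence_def equiv_def refl_on_def by blast
lemma cR_sym: "congruence R \<Longrightarrow> (a,b) \<in> R \<Longrightarrow> (b,a) \<in> R"
  unfolding congruence_def equiv_def sym_def by blast
lemma cR_trans: "congruence R \<Longrightarrow> (a,b) \<in> R \<Longrightarrow> (b,c) \<in> R \<Longrightarrow> (a,c) \<in> R"
  unfolding congruence_def equiv_def trans_def by blast
lemma cR_addr: "congruence R \<Longrightarrow> (a,b) \<in> R \<Longrightarrow> (a+c,b+c) \<in> R"
  unfolding congruence_def by blast
lemma cR_addl: "congruence R \<Longrightarrow> (a,b) \<in> R \<Longrightarrow> (c+a,c+b) \<in> R"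
  using cR_addr[of R a b c] by (simp add: add.commute)

lemma nsum_0[simp]: "nsum 0 m = 0" by (simp add: nsum_def)
lemma nsum_Suc: "nsum (Suc n) m = m + nsum n m" by (simp add: nsum_def add.commute)
lemma nsum_add: "nsum (i+j) m = nsum i m + nsum j m"
  by (induct i) (simp_all add: nsum_Suc add.assoc)

lemma nil_add: assumes c: "congruence R" and n: "qnil R a" shows "qnil R (c + a)"
  unfolding qnil_def
proof
  fix m
  have "(m + c + a, a) \<in> R" "(c + a, a) \<in> R" using n unfolding qnil_def by auto
  then show "(m + (c + a), c + a) \<in> R" using c cR_sym cR_trans by (metis add.assoc)
qed

lemma nil_cong: assumes c: "congruence R" and n: "qnil R a" and ab: "(a,b) \<in> R" shows "qnil R b"
  unfolding qnil_def
proof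
  fix m
  have "(m + b, m + a) \<in> R" using cR_addl[OF c cR_sym[OF c ab]] .
  moreover have "(m + a, a) \<in> R" using n unfolding qnil_def by auto
  ultimately show "(m + b, b) \<in> R" using c ab cR_trans by metis
qed

lemma nil_nil: assumes c: "congruence R" and "qnil R a" "qnil R b" shows "(a,b) \<in> R"
proof -
  have "(b + a, a) \<in> R" "(a + b, b) \<in> R" using assms unfolding qnil_def by auto
  then show ?thesis using c cR_sym cR_trans by (metis add.commute)
qed

lemma nil_canc: assumes c: "congruence R" and "qnil R z" "qcancellative R z" shows "(a,b) \<in> R"
proof -
  have "(a + z, z) \<in> R" "(b + z, z) \<in> R" using assms unfolding qnil_def by auto
  then have "(z + a, z + b) \<in> R" using c cR_sym cR_trans by (metis add.commute)
  then show ?thesis using assms unfolding qcancellative_def by blast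
qed

lemma canc_0: "qcancellative R 0" unfolding qcancellative_def by simp
lemma canc_add: "qcancellative R a \<Longrightarrow> qcancellative R b \<Longrightarrow> qcancellative R (a + b)"
  unfolding qcancellative_def by (metis add.assoc)
lemma canc_nsum: "qcancellative R m \<Longrightarrow> qcancellative R (nsum n m)"
  by (induct n) (simp_all add: canc_0 nsum_Suc canc_add)

lemma canc_not_nilp: assumes c: "congruence R" and nt: "(a0,b0) \<notin> R" and "qcancellative R m"
  shows "\<not> qnilpotent R m"
proof
  assume "qnilpotent R m"
  then obtain n where "qnil R (nsum n m)" unfolding qnilpotent_def by blast
  moreover have "qcancellative R (nsum n m)" using assms canc_nsum by blast
  ultimately show False using nil_canc[OF c] nt by blast
qed

lemma mon_gen_empty: "x \<in> mon_gen {} \<Longrightarrow> x = 0"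
  by (induct rule: mon_gen.induct) auto

lemma mon_gen_insert: "x \<in> mon_gen (insert g H) \<Longrightarrow> \<exists>j y. y \<in> mon_gen H \<and> x = nsum j g + y"
proof (induct rule: mon_gen.induct)
  case zero
  then show ?case using mon_gen.zero by (metis add_0 nsum_0)
next
  case (gen x)
  then show ?case
  proof
    assume "x = g" then show ?thesis using mon_gen.zero nsum_Suc[of 0 g] by (metis add_0_right nsum_0)
  next
    assume "x \<in> H" then show ?thesis using mon_gen.gen by (metis add_0 nsum_0)
  qed
next
  case (add x y)
  then obtain j1 y1 j2 y2 where "y1 \<in> mon_gen H" "x = nsum j1 g + y1" "y2 \<in> mon_gen H" "y = nsum j2 g + y2"
    by blast
  then show ?case using mon_gen.add nsum_add[of j1 j2 g]
    by (metis (no_types, lifting) add.assoc add.left_commute)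
qed

lemma fin_P:
  assumes c: "congruence R" and nt: "(a0,b0) \<notin> R"
    and prim: "\<forall>m. qnilpotent R m \<or> qcancellative R m" and fin: "finite H"
  shows "\<exists>P. finite P \<and> (\<forall>x\<in>mon_gen H. qnil R x \<or> (\<exists>p\<in>P. \<exists>f\<in>Fset R. (f + p, x) \<in> R))"
  using fin
proof induct
  case empty
  have "0 \<in> Fset R" using canc_not_nilp[OF c nt canc_0] unfolding Fset_def by simp
  then show ?case using mon_gen_empty cR_refl[OF c]
    by (metis add_0 finite.emptyI finite_insert insertI1)
next
  case (insert g H)
  then obtain P where fP: "finite P"
    and P: "\<forall>x\<in>mon_gen H. qnil R x \<or> (\<exists>p\<in>P. \<exists>f\<in>Fset R. (f + p, x) \<in> R)" by blast
  show ?case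
  proof (cases "qcancellative R g")
    case True
    have "qnil R x \<or> (\<exists>p\<in>P. \<exists>f\<in>Fset R. (f + p, x) \<in> R)" if x: "x \<in> mon_gen (insert g H)" for x
    proof -
      obtain j y where y: "y \<in> mon_gen H" "x = nsum j g + y" using mon_gen_insert[OF x] by blast
      from P y(1) consider "qnil R y" | p f where "p \<in> P" "f \<in> Fset R" "(f + p, y) \<in> R" by blast
      then show ?thesis
      proof cases
        case 1 then show ?thesis using nil_add[OF c] y by blast
      next
        case 2
        have "qcancellative R f" using 2 prim unfolding Fset_def by blast
        then have "qcancellative R (nsum j g + f)" using canc_add canc_nsum True by blast
        then have F: "nsum j g + f \<in> Fset R" using canc_not_nilp[OF c nt] unfolding Fset_def by blast
        have "(nsum j g + (f + p), x) \<in> R" using cR_addl[OF c 2(3)] y by simp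
        then show ?thesis using F 2 by (metis add.assoc)
      qed
    qed
    then show ?thesis using fP by blast
  next
    case False
    then obtain k where k: "qnil R (nsum k g)" using prim unfolding qnilpotent_def by blast
    define P' where "P' = (\<lambda>(i,p). nsum i g + p) ` ({..<k} \<times> P)"
    have "finite P'" unfolding P'_def using fP by simp
    moreover
    have "qnil R x \<or> (\<exists>p\<in>P'. \<exists>f\<in>Fset R. (f + p, x) \<in> R)" if x: "x \<in> mon_gen (insert g H)" for x
    proof -
      obtain j y where y: "y \<in> mon_gen H" "x = nsum j g + y" using mon_gen_insert[OF x] by blast
      show ?thesis
      proof (cases "j < k")
        case False
        then have "nsum j g = nsum (j - k) g + nsum k g" using nsum_add[of "j-k" k g] by simp
        then have "qnil R (nsum j g)" using nil_add[OF c k] by simp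
        then have "qnil R (y + nsum j g)" using nil_add[OF c] by blast
        then show ?thesis using y by (simp add: add.commute)
      next
        case jk: True
        from P y(1) consider "qnil R y" | p f where "p \<in> P" "f \<in> Fset R" "(f + p, y) \<in> R" by blast
        then show ?thesis
        proof cases
          case 1 then show ?thesis using nil_add[OF c] y by blast
        next
          case 2
          have "nsum j g + p \<in> P'" unfolding P'_def using jk 2 by force
          moreover have "(nsum j g + (f + p), x) \<in> R" using cR_addl[OF c 2(3)] y by simp
          ultimately show ?thesis using 2 by (metis add.left_commute)
        qed
      qed
    qed
    ultimately show ?thesis by blast
  qed
qed

theorem corollary6p6:
  fixes R :: "('a::comm_monoid_add \<times> 'a) set"
  assumes "fin_gen_monoid TYPE('a)"
    and "congruence R"
    and "\<exists>a b. (a, b) \<notin> R"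
  shows "mesoprimary R \<longleftrightarrow>
           F_cancellative_monoid R \<and> F_acts_semifreely R \<and> finite (orbits R)"
proof -
  note c = assms(2)
  obtain a0 b0 where nt: "(a0,b0) \<notin> R" using assms(3) by blast
  have nil0: "\<not> qnil R 0"
  proof
    assume "qnil R 0"
    then have "(a0, 0) \<in> R" "(b0, 0) \<in> R" unfolding qnil_def by (metis add_0_right)+
    then show False using nt c cR_sym cR_trans by metis
  qed
  have canc_F: "x \<in> Fset R" if "qcancellative R x" for x
    using canc_not_nilp[OF c nt that] unfolding Fset_def by blast
  have nilT: "\<not> qnil R x" if "x \<in> Tset R" for x using that unfolding Tset_def by blast
  show ?thesis
  proof
    assume m: "mesoprimary R"
    then have prim: "\<forall>m. qnilpotent R m \<or> qcancellative R m" and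
      pc: "\<forall>m. qpartly_cancellative R m"
      unfolding mesoprimary_def primary_def by auto
    have Fc: "qcancellative R x" if "x \<in> Fset R" for x using that prim unfolding Fset_def by blast
    have act1: "a + b \<in> Tset R" if "a \<in> Fset R" "b \<in> Tset R" for a b
    proof -
      have "qnil R b" if n: "qnil R (a + b)"
        unfolding qnil_def
      proof
        fix m
        have "(m + (a + b), a + b) \<in> R" using n unfolding qnil_def by blast
        then have "(a + (m + b), a + b) \<in> R" by (simp add: ac_simps)
        then show "(m + b, b) \<in> R" using Fc[OF \<open>a \<in> Fset R\<close>] unfolding qcancellative_def by blast
      qed
      then show ?thesis using that unfolding Tset_def by blast
    qed
    have "F_cancellative_monoid R"
      unfolding F_cancellative_monoid_def
    proof (intro conjI ballI impI)
      show "0 \<in> Fset R" by (rule canc_F[OF canc_0])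
    next
      fix a b assume "a \<in> Fset R" "b \<in> Fset R"
      then show "a + b \<in> Fset R" using canc_F canc_add Fc by blast
    next
      fix a b d assume "a \<in> Fset R" "(a + b, a + d) \<in> R"
      then show "(b, d) \<in> R" using Fc unfolding qcancellative_def by blast
    qed
    moreover have "F_acts_semifreely R"
      unfolding F_acts_semifreely_def
    proof (intro conjI ballI impI)
      fix a b assume "a \<in> Fset R" "b \<in> Tset R" then show "a + b \<in> Tset R" by (rule act1)
    next
      fix a b d assume "a \<in> Fset R" "(a + b, a + d) \<in> R"
      then show "(b, d) \<in> R" using Fc unfolding qcancellative_def by blast
    next
      fix b a a' assume h: "b \<in> Tset R" "a \<in> Fset R" "a' \<in> Fset R" "(a + b, a' + b) \<in> R"
      have "\<not> qnil R (b + a)" using act1[OF h(2,1)] unfolding Tset_def by (simp add: add.commute)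
      then show "(a, a') \<in> R" using pc h Fc unfolding qpartly_cancellative_def
        by (metis add.commute)
    qed
    moreover have "finite (orbits R)"
    proof -
      obtain G :: "'a set" where G: "finite G" "mon_gen G = UNIV"
        using assms(1) unfolding fin_gen_monoid_def by blast
      obtain P where fP: "finite P"
        and P: "\<forall>x\<in>mon_gen G. qnil R x \<or> (\<exists>p\<in>P. \<exists>f\<in>Fset R. (f + p, x) \<in> R)"
        using fin_P[OF c nt prim G(1)] by blast
      define E where "E = (orbit_step R \<union> (orbit_step R)\<inverse>)\<^sup>*"
      have symE: "sym E" unfolding E_def by (simp add: sym_Un_converse sym_rtrancl)
      have transE: "trans E" unfolding E_def by (rule trans_rtrancl)
      have "orbits R \<subseteq> (\<lambda>p. E `` {p}) ` P"
      proof
        fix Ob assume "Ob \<in> orbits R"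
        then obtain x where x: "x \<in> Tset R" "Ob = E `` {x}"
          unfolding orbits_def E_def quotient_def by blast
        then obtain p f where pf: "p \<in> P" "f \<in> Fset R" "(f + p, x) \<in> R"
          using P G(2) nilT by blast
        have "p \<in> Tset R"
        proof (rule ccontr)
          assume "p \<notin> Tset R"
          then have "qnil R p" unfolding Tset_def by blast
          then have "qnil R (f + p)" using nil_add[OF c] by blast
          then have "qnil R x" using nil_cong[OF c] pf(3) by blast
          then show False using x nilT by blast
        qed
        then have "(p, x) \<in> orbit_step R" using x pf unfolding orbit_step_def by blast
        then have px: "(p, x) \<in> E" unfolding E_def by blast
        then have xp: "(x, p) \<in> E" using symE unfolding sym_def by blast
        have "E `` {x} = E `` {p}"
          using px xp transE unfolding trans_def by blast
        then show "Ob \<in> (\<lambda>p. E `` {p}) ` P" using x pf by blast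
      qed
      then show ?thesis using fP finite_subset by blast
    qed
    ultimately show "F_cancellative_monoid R \<and> F_acts_semifreely R \<and> finite (orbits R)" by blast
  next
    assume "F_cancellative_monoid R \<and> F_acts_semifreely R \<and> finite (orbits R)"
    then have A1: "\<And>a b. a \<in> Fset R \<Longrightarrow> b \<in> Tset R \<Longrightarrow> a + b \<in> Tset R"
      and A2: "\<And>a b d. a \<in> Fset R \<Longrightarrow> b \<in> Tset R \<Longrightarrow> d \<in> Tset R \<Longrightarrow> (a + b, a + d) \<in> R \<Longrightarrow> (b, d) \<in> R"
      and A3: "\<And>b a a'. b \<in> Tset R \<Longrightarrow> a \<in> Fset R \<Longrightarrow> a' \<in> Fset R \<Longrightarrow> (a + b, a' + b) \<in> R \<Longrightarrow> (a, a') \<in> R"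
      unfolding F_acts_semifreely_def by blast+
    have cancF: "qcancellative R m" if mF: "m \<in> Fset R" for m
      unfolding qcancellative_def
    proof (intro allI impI)
      fix a b assume ab: "(m + a, m + b) \<in> R"
      show "(a, b) \<in> R"
      proof (cases "qnil R a")
        case True
        then have "qnil R (m + a)" using nil_add[OF c] by blast
        then have "qnil R (m + b)" using nil_cong[OF c] ab by blast
        then have "qnil R b" using A1[OF mF, of b] unfolding Tset_def by blast
        then show ?thesis using nil_nil[OF c True] by blast
      next
        case False
        show ?thesis
        proof (cases "qnil R b")
          case True
          then have "qnil R (m + b)" using nil_add[OF c] by blast
          then have "qnil R (m + a)" using nil_cong[OF c] cR_sym[OF c ab] by blast
          then show ?thesis using A1[OF mF, of a] False unfolding Tset_def by blast
        next
          case False2: False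
          then show ?thesis using A2[OF mF, of a b] False ab unfolding Tset_def by blast
        qed
      qed
    qed
    have prim: "\<forall>m. qnilpotent R m \<or> qcancellative R m"
      using cancF unfolding Fset_def by blast
    have pc: "qpartly_cancellative R m" for m
      unfolding qpartly_cancellative_def
    proof (intro allI impI)
      fix a b assume h: "qcancellative R a \<and> qcancellative R b \<and> (m + a, m + b) \<in> R \<and> \<not> qnil R (m + a)"
      have "\<not> qnil R m"
      proof
        assume "qnil R m"
        then have "qnil R (a + m)" by (rule nil_add[OF c])
        then show False using h by (simp add: add.commute)
      qed
      then have mT: "m \<in> Tset R" unfolding Tset_def by blast
      have aF: "a \<in> Fset R" and bF: "b \<in> Fset R" using h canc_F by blast+
      have "(a + m, b + m) \<in> R" using h by (simp add: add.commute)
      then show "(a, b) \<in> R" using A3[OF mT aF bF] by blast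
    qed
    show "mesoprimary R" unfolding mesoprimary_def primary_def using c prim pc by blast
  qed
qed

end
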